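(* Let $d \geq 2$, $n$, $k$ and $j$ be positive integers with $k \leq n$, and suppose that either ($n \geq 2k$ and $j < k$) or ($n < 2k$ and $j < n-k$). Then there exist a point set $P \subseteq [0,1]^d$ with $|P| = n$ and a subset $S \subseteq P$ with $|S| = k$ such that $S$ is a local minimum of the $k$-SDSSP-$j$ problem on $P$ (i.e., no $j$-swap applied to $S$ yields a $k$-subset of $P$ with strictly smaller $L_\infty$ star discrepancy), but $S$ is not a global minimum (i.e., there is a subset $S' \subseteq P$ with $|S'| = k$ and $d_\infty^*(S') < d_\infty^*(S)$).
   Context: For a finite point set $Q \subseteq [0,1]^d$, its $L_\infty$ star discrepancy is $d_\infty^*(Q) := \sup_{q \in [0,1]^d} \left| \frac{|Q \cap [0,q)|}{|Q|} - \lambda([0,q)) \right|$, where $[0,q) = [0,q_1) \times \cdots \times [0,q_d)$ and $\lambda$ denotes Lebesgue measure. Given a point set $P \subseteq [0,1]^d$ with $|P| = n$ and a subset $S \subseteq P$ with $|S| = k$, a $j$-swap replaces $S$ by $(S \setminus A) \cup B$ where $A \subseteq S$ and $B \subseteq P \setminus S$ with $|A| = |B| = j$ (i.e., $j$ points of $S$ are simultaneously replaced by $j$ points of $P$ not in $S$). The $k$-SDSSP-$j$ problem is the problem of obtaining a subset of $P$ of size $k$ of minimal $L_\infty$ star discrepancy by only performing improving $j$-swaps (swaps that strictly decrease the star discrepancy); a local minimum of this problem is a $k$-subset from which no $j$-swap strictly decreases the star discrepancy, and a global minimum is a $k$-subset whose star discrepancy is minimal among all $k$-subsets of $P$. *)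

theory Defs
  imports "HOL-Analysis.Analysis"
begin

text \<open>The unit cube [0,1]^d, with d = CARD('n).\<close>
definition unit_cube :: "(real ^ 'n) set" where
  "unit_cube = {x. \<forall>i. 0 \<le> x $ i \<and> x $ i \<le> 1}"

definition anchored_box :: "real ^ 'n \<Rightarrow> (real ^ 'n) set" where
  "anchored_box q = {x. \<forall>i. 0 \<le> x $ i \<and> x $ i < q $ i}"

definition star_discrepancy :: "(real ^ 'n) set \<Rightarrow> real" where
  "star_discrepancy Q = (SUP q\<in>unit_cube.
      \<bar>real (card (Q \<inter> anchored_box q)) / real (card Q) - measure lborel (anchored_box q)\<bar>)"

definition j_swap :: "(real ^ 'n) set \<Rightarrow> (real ^ 'n) set \<Rightarrow> nat \<Rightarrow> (real ^ 'n) set \<Rightarrow> bool" where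
  "j_swap P S j S' \<longleftrightarrow> (\<exists>A B. A \<subseteq> S \<and> B \<subseteq> P - S \<and> card A = j \<and> card B = j
                          \<and> S' = (S - A) \<union> B)"

definition local_min_SDSSP :: "(real ^ 'n) set \<Rightarrow> nat \<Rightarrow> nat \<Rightarrow> (real ^ 'n) set \<Rightarrow> bool" where
  "local_min_SDSSP P k j S \<longleftrightarrow> S \<subseteq> P \<and> card S = k \<and>
     (\<forall>S'. j_swap P S j S' \<longrightarrow> \<not> star_discrepancy S' < star_discrepancy S)"

definition global_min_SDSSP :: "(real ^ 'n) set \<Rightarrow> nat \<Rightarrow> (real ^ 'n) set \<Rightarrow> bool" where
  "global_min_SDSSP P k S \<longleftrightarrow> S \<subseteq> P \<and> card S = k \<and>
     (\<forall>S'. S' \<subseteq> P \<and> card S' = k \<longrightarrow> star_discrepancy S \<le> star_discrepancy S')"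

end

theory Submission
  imports Defs
begin

lemma anchored_box_sets: "anchored_box (q::real^'n) \<in> sets lborel"
  unfolding anchored_box_def by measurable

lemma vol_eq:
  fixes q :: "real^'n"
  assumes "\<forall>i. 0 \<le> q$i"
  shows "measure lborel (anchored_box q) = (\<Prod>i\<in>UNIV. q$i)"
proof -
  have "0 \<in> cbox 0 q" using assms by (simp add: mem_box_cart)
  then have c: "cbox 0 q \<noteq> {}" by blast
  have e1: "measure lborel (cbox 0 q) = (\<Prod>i\<in>UNIV. q$i)"
    using content_cbox_cart[OF c] by simp
  have hb: "\<forall>b\<in>Basis. (0::real^'n)\<bullet>b \<le> q\<bullet>b"
    using assms by (auto simp: Basis_vec_def cart_eq_inner_axis[symmetric])
  have e2: "measure lborel (box 0 q) = measure lborel (cbox 0 q)"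
    using hb by (simp add: content_cbox measure_lborel_box)
  have s1: "box 0 q \<subseteq> anchored_box q" by (auto simp: anchored_box_def mem_box_cart less_imp_le)
  have s2: "anchored_box q \<subseteq> cbox 0 q" by (auto simp: anchored_box_def mem_box_cart less_imp_le)
  have "measure lborel (box 0 q) \<le> measure lborel (anchored_box q)"
    by (rule measure_mono_fmeasurable[OF s1]) (auto intro: fmeasurableI2[OF _ s2] anchored_box_sets)
  moreover have "measure lborel (anchored_box q) \<le> measure lborel (cbox 0 q)"
    by (rule measure_mono_fmeasurable[OF s2]) (use anchored_box_sets in auto)
  ultimately show ?thesis using e1 e2 by linarith
qed

lemma cube_vol: "q \<in> unit_cube \<Longrightarrow> measure lborel (anchored_box q) = (\<Prod>i\<in>UNIV. q$i)"
  by (rule vol_eq) (simp add: unit_cube_def)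

lemma prod_nonneg_cube: "q \<in> unit_cube \<Longrightarrow> 0 \<le> (\<Prod>i\<in>UNIV. q$i)"
  by (rule prod_nonneg) (simp add: unit_cube_def)

lemma prod_le_comp: "q \<in> unit_cube \<Longrightarrow> (\<Prod>i\<in>UNIV. q$i) \<le> q$i0"
proof -
  assume q: "q \<in> unit_cube"
  have "(\<Prod>i\<in>UNIV. q$i) = q$i0 * (\<Prod>i\<in>UNIV-{i0}. q$i)"
    by (simp add: prod.remove)
  also have "\<dots> \<le> q$i0 * 1"
    using q by (intro mult_left_mono prod_le_1) (auto simp: unit_cube_def)
  finally show ?thesis by simp
qed

lemma prod_le_one: "q \<in> unit_cube \<Longrightarrow> (\<Prod>i\<in>UNIV. q$i) \<le> 1"
  using prod_le_comp[of q] by (auto simp: unit_cube_def intro: order_trans)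

lemma prod_le_mem:
  assumes "finite I" "i0 \<in> I" "\<forall>i\<in>I. 0 \<le> f i \<and> f i \<le> (1::real)"
  shows "prod f I \<le> f i0"
proof -
  have "prod f I = f i0 * prod f (I-{i0})"
    using assms by (simp add: prod.remove)
  also have "\<dots> \<le> f i0 * 1"
    using assms by (intro mult_left_mono prod_le_1) auto
  finally show ?thesis by simp
qed

lemma prod_le_two:
  assumes q: "q \<in> unit_cube" and ne: "i1 \<noteq> i2"
  shows "(\<Prod>i\<in>UNIV. q$i) \<le> q$i1 * q$i2"
proof -
  have "(\<Prod>i\<in>UNIV. q$i) = q$i1 * (\<Prod>i\<in>UNIV-{i1}. q$i)"
    by (simp add: prod.remove)
  also have "\<dots> \<le> q$i1 * q$i2"
    using q ne by (intro mult_left_mono prod_le_mem) (auto simp: unit_cube_def)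
  finally show ?thesis .
qed

lemma prod_ge_pow:
  fixes q :: "real^'n"
  assumes "\<forall>i. c \<le> q$i" "0 \<le> c"
  shows "c ^ CARD('n) \<le> (\<Prod>i\<in>UNIV. q$i)"
proof -
  have "(\<Prod>i\<in>(UNIV::'n set). c) \<le> (\<Prod>i\<in>UNIV. q$i)"
    using assms by (intro prod_mono) auto
  then show ?thesis by simp
qed

lemma prod_zero_if: "(q::real^'n)$i0 = 0 \<Longrightarrow> (\<Prod>i\<in>UNIV. q$i) = 0"
  using prod_zero_iff[of UNIV "\<lambda>i. q$i"] by auto

definition dterm :: "(real^'n) set \<Rightarrow> real^'n \<Rightarrow> real" where
  "dterm Q q = \<bar>real (card (Q \<inter> anchored_box q)) / real (card Q) - measure lborel (anchored_box q)\<bar>"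

lemma dterm_le2:
  assumes "finite Q" "q \<in> unit_cube"
  shows "dterm Q q \<le> 2"
proof -
  have "card (Q \<inter> anchored_box q) \<le> card Q" using assms by (intro card_mono) auto
  then have a: "real (card (Q \<inter> anchored_box q)) / real (card Q) \<le> 1"
    by (cases "card Q = 0") (auto simp: divide_le_eq_1)
  have b: "0 \<le> real (card (Q \<inter> anchored_box q)) / real (card Q)" by simp
  have e: "measure lborel (anchored_box q) = (\<Prod>i\<in>UNIV. q$i)" by (rule cube_vol[OF assms(2)])
  have c: "0 \<le> measure lborel (anchored_box q)" "measure lborel (anchored_box q) \<le> 1"
    unfolding e using assms prod_nonneg_cube prod_le_one by auto
  show ?thesis unfolding dterm_def using a b c by linarith
qed

lemma disc_ge:
  assumes "finite Q" "q \<in> unit_cube"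
  shows "\<bar>real (card (Q \<inter> anchored_box q)) / real (card Q) - (\<Prod>i\<in>UNIV. q$i)\<bar> \<le> star_discrepancy Q"
proof -
  have "dterm Q q \<le> star_discrepancy Q"
    unfolding star_discrepancy_def dterm_def[symmetric]
    by (rule cSUP_upper[OF assms(2)]) (use dterm_le2[OF assms(1)] in \<open>auto intro!: bdd_aboveI2\<close>)
  moreover have e: "measure lborel (anchored_box q) = (\<Prod>i\<in>UNIV. q$i)" by (rule cube_vol[OF assms(2)])
  ultimately show ?thesis unfolding dterm_def by simp
qed

lemma cube_ne: "unit_cube \<noteq> {}"
  unfolding unit_cube_def by (auto intro!: exI[of _ 0])

lemma disc_le:
  fixes Q :: "(real^'n) set"
  assumes "\<And>q. q \<in> unit_cube \<Longrightarrow> real (card (Q \<inter> anchored_box q)) / real (card Q) - (\<Prod>i\<in>UNIV. q$i) \<le> B"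
    and "\<And>q. q \<in> unit_cube \<Longrightarrow> (\<Prod>i\<in>UNIV. q$i) - real (card (Q \<inter> anchored_box q)) / real (card Q) \<le> B"
  shows "star_discrepancy Q \<le> B"
  unfolding star_discrepancy_def
proof (rule cSUP_least[OF cube_ne])
  fix q :: "real^'n" assume q: "q \<in> unit_cube"
  show "\<bar>real (card (Q \<inter> anchored_box q)) / real (card Q) - measure lborel (anchored_box q)\<bar> \<le> B"
    using assms(1)[OF q] assms(2)[OF q] cube_vol[OF q] by (simp add: abs_le_iff)
qed

definition lift :: "'n \<Rightarrow> 'n \<Rightarrow> real \<Rightarrow> real \<Rightarrow> real^'n" where
  "lift i1 i2 x y = (\<chi> i. if i = i1 then x else if i = i2 then y else 0)"
definition ivp :: "'n \<Rightarrow> 'n \<Rightarrow> nat \<Rightarrow> real^'n" where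
  "ivp i1 i2 r = (\<chi> i. if i = i1 then 1 else if i = i2 then 1 / (real r + 2) else 0)"
definition corner :: "'n \<Rightarrow> 'n \<Rightarrow> real \<Rightarrow> real \<Rightarrow> real^'n" where
  "corner i1 i2 x y = (\<chi> i. if i = i1 then x else if i = i2 then y else 1)"

lemma lift_cube: "0 \<le> x \<Longrightarrow> x \<le> 1 \<Longrightarrow> 0 \<le> y \<Longrightarrow> y \<le> 1 \<Longrightarrow> lift i1 i2 x y \<in> unit_cube"
  by (auto simp: lift_def unit_cube_def)

lemma ivp_cube: "ivp i1 i2 r \<in> unit_cube"
  by (auto simp: ivp_def unit_cube_def)

lemma corner_cube: "0 \<le> x \<Longrightarrow> x \<le> 1 \<Longrightarrow> 0 \<le> y \<Longrightarrow> y \<le> 1 \<Longrightarrow> corner i1 i2 x y \<in> unit_cube"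
  by (auto simp: corner_def unit_cube_def)

lemma vec_cube: "0 \<le> x \<Longrightarrow> x \<le> 1 \<Longrightarrow> (vec x :: real^'n) \<in> unit_cube"
  by (auto simp: unit_cube_def)

lemma corner_prod:
  assumes "i1 \<noteq> i2"
  shows "(\<Prod>i\<in>UNIV. corner i1 i2 x y $ i) = x * y"
proof -
  have "(\<Prod>i\<in>UNIV. corner i1 i2 x y $ i) = corner i1 i2 x y $ i1 * (\<Prod>i\<in>UNIV-{i1}. corner i1 i2 x y $ i)"
    by (intro prod.remove) auto
  also have "corner i1 i2 x y $ i1 = x" by (simp add: corner_def)
  also have "(\<Prod>i\<in>UNIV-{i1}. corner i1 i2 x y $ i) = corner i1 i2 x y $ i2 * (\<Prod>i\<in>UNIV-{i1}-{i2}. corner i1 i2 x y $ i)"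
    using assms by (intro prod.remove) auto
  also have "corner i1 i2 x y $ i2 = y" using assms by (simp add: corner_def)
  also have "(\<Prod>i\<in>UNIV-{i1}-{i2}. corner i1 i2 x y $ i) = 1"
    by (rule prod.neutral) (simp add: corner_def)
  finally show ?thesis by simp
qed

lemma vec_prod: "(\<Prod>i\<in>UNIV. (vec x :: real^'n) $ i) = x ^ CARD('n)"
  by simp

lemma ivp_notin: "q \<in> unit_cube \<Longrightarrow> ivp i1 i2 r \<notin> anchored_box q"
  by (auto simp: ivp_def unit_cube_def anchored_box_def) (metis not_le)

lemma lift_in_box:
  assumes "i1 \<noteq> i2" "0 \<le> x" "0 \<le> y"
  shows "lift i1 i2 x y \<in> anchored_box q \<longleftrightarrow> x < q$i1 \<and> y < q$i2 \<and> (\<forall>i. i \<noteq> i1 \<longrightarrow> i \<noteq> i2 \<longrightarrow> 0 < q$i)"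
proof
  assume "lift i1 i2 x y \<in> anchored_box q"
  then have h: "\<And>i. lift i1 i2 x y $ i < q $ i" by (simp add: anchored_box_def)
  have "\<forall>i. i \<noteq> i1 \<longrightarrow> i \<noteq> i2 \<longrightarrow> 0 < q$i"
  proof (intro allI impI)
    fix i assume "i \<noteq> i1" "i \<noteq> i2"
    then show "0 < q$i" using h[of i] by (simp add: lift_def)
  qed
  then show "x < q$i1 \<and> y < q$i2 \<and> (\<forall>i. i \<noteq> i1 \<longrightarrow> i \<noteq> i2 \<longrightarrow> 0 < q$i)"
    using h[of i1] h[of i2] assms by (simp add: lift_def)
next
  assume r: "x < q$i1 \<and> y < q$i2 \<and> (\<forall>i. i \<noteq> i1 \<longrightarrow> i \<noteq> i2 \<longrightarrow> 0 < q$i)"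
  show "lift i1 i2 x y \<in> anchored_box q"
    unfolding anchored_box_def
  proof (intro CollectI allI)
    fix i
    show "0 \<le> lift i1 i2 x y $ i \<and> lift i1 i2 x y $ i < q $ i"
      using r assms by (cases "i = i1"; cases "i = i2") (auto simp: lift_def)
  qed
qed

lemma lift_in_corner:
  assumes "i1 \<noteq> i2" "0 \<le> x" "0 \<le> y"
  shows "lift i1 i2 x y \<in> anchored_box (corner i1 i2 u v) \<longleftrightarrow> x < u \<and> y < v"
  using assms by (simp add: lift_in_box corner_def)

lemma lift_notin_vol:
  assumes q: "q \<in> unit_cube" and "i1 \<noteq> i2" "0 \<le> x" "0 \<le> y" "lift i1 i2 x y \<notin> anchored_box q"
  shows "(\<Prod>i\<in>UNIV. q$i) = 0 \<or> q$i1 \<le> x \<or> q$i2 \<le> y"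
proof -
  from assms have "\<not> (x < q$i1 \<and> y < q$i2 \<and> (\<forall>i. i \<noteq> i1 \<longrightarrow> i \<noteq> i2 \<longrightarrow> 0 < q$i))"
    using lift_in_box by blast
  then consider "q$i1 \<le> x" | "q$i2 \<le> y" | i where "q$i \<le> 0" by (auto simp: not_less)
  then show ?thesis
  proof cases
    case 3
    then have "q$i = 0" using q by (auto simp: unit_cube_def intro: antisym)
    then show ?thesis using prod_zero_if by blast
  qed auto
qed

lemma lift_notin_vol2:
  assumes q: "q \<in> unit_cube" and "i1 \<noteq> i2" "0 \<le> x" "0 \<le> y" "lift i1 i2 x y \<notin> anchored_box q"
  shows "(\<Prod>i\<in>UNIV. q$i) \<le> max x y"
proof -
  have a: "(\<Prod>i\<in>UNIV. q$i) \<le> q$i1" "(\<Prod>i\<in>UNIV. q$i) \<le> q$i2"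
    using prod_le_comp[OF q] by auto
  from lift_notin_vol[OF assms] consider "(\<Prod>i\<in>UNIV. q$i) = 0" | "q$i1 \<le> x" | "q$i2 \<le> y" by blast
  then show ?thesis using a assms(3) by cases linarith+
qed

lemma lift_inj: "i1 \<noteq> i2 \<Longrightarrow> lift i1 i2 x y = lift i1 i2 x' y' \<longleftrightarrow> x = x' \<and> y = y'"
  unfolding lift_def by (auto simp: vec_eq_iff)

lemma ivp_inj: "i1 \<noteq> i2 \<Longrightarrow> ivp i1 i2 r = ivp i1 i2 r' \<longleftrightarrow> r = r'"
  unfolding ivp_def by (auto simp: vec_eq_iff)

lemma inj_ivp: "i1 \<noteq> i2 \<Longrightarrow> inj (ivp i1 i2)"
  by (auto simp: inj_def ivp_inj)

lemma lift_ne_ivp: "x \<noteq> 1 \<Longrightarrow> lift i1 i2 x y \<noteq> ivp i1 i2 r"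
  unfolding lift_def ivp_def by (auto simp: vec_eq_iff)

lemma vec_ne_ivp: "x \<noteq> 1 \<Longrightarrow> vec x \<noteq> ivp i1 i2 r"
  unfolding ivp_def by (auto simp: vec_eq_iff)

lemma vec_in_box: "0 \<le> s \<Longrightarrow> (vec s :: real^'n) \<in> anchored_box q \<longleftrightarrow> (\<forall>i. s < q$i)"
  by (auto simp: anchored_box_def)

lemma vec_notin_vol:
  assumes "q \<in> unit_cube" "0 \<le> s" "(vec s :: real^'n) \<notin> anchored_box q"
  shows "(\<Prod>i\<in>UNIV. q$i) \<le> s"
proof -
  obtain i where "q$i \<le> s" using assms vec_in_box by (metis not_le)
  then show ?thesis using prod_le_comp[OF assms(1), of i] by simp
qed

lemma origin_notin_vol:
  assumes "q \<in> unit_cube" "(vec 0 :: real^'n) \<notin> anchored_box q"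
  shows "(\<Prod>i\<in>UNIV. q$i) = 0"
proof -
  have "(\<Prod>i\<in>UNIV. q$i) \<le> 0" by (rule vec_notin_vol[OF assms(1) _ assms(2)]) simp
  then show ?thesis using prod_nonneg_cube[OF assms(1)] by linarith
qed

lemma lift00: "lift i1 i2 0 0 = vec 0"
  by (simp add: lift_def vec_eq_iff)

lemma one_visible:
  fixes X :: "(real^'n) set"
  assumes "finite X" "card X = k" "0 < k" "card (X \<inter> anchored_box (vec 1)) \<le> 1"
  shows "1 - 1 / real k \<le> star_discrepancy X"
proof -
  have q: "(vec 1 :: real^'n) \<in> unit_cube" by (rule vec_cube) auto
  have "\<bar>real (card (X \<inter> anchored_box (vec 1))) / real (card X) - (\<Prod>i\<in>UNIV. (vec 1::real^'n)$i)\<bar> \<le> star_discrepancy X"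
    by (rule disc_ge[OF assms(1) q])
  moreover have "real (card (X \<inter> anchored_box (vec 1))) / real k \<le> 1 / real k"
    using assms(3,4) by (simp add: divide_right_mono)
  moreover have "1 / real k \<le> 1" using assms(3) by simp
  ultimately show ?thesis using assms(2) by (simp add: abs_if split: if_splits)
qed

lemma origin_lb:
  fixes X :: "(real^'n) set"
  assumes "finite X" "card X = k" "0 < k" "vec 0 \<in> X"
  shows "1 / real k \<le> star_discrepancy X"
proof (rule ccontr)
  assume "\<not> 1 / real k \<le> star_discrepancy X"
  then have lt: "star_discrepancy X < 1 / real k" by simp
  define e where "e = min 1 ((1 / real k - star_discrepancy X) / 2)"
  have e0: "0 < e" "e \<le> 1" using lt by (auto simp: e_def)
  have q: "(vec e :: real^'n) \<in> unit_cube" using e0 by (intro vec_cube) auto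
  have "vec 0 \<in> X \<inter> anchored_box (vec e)" using assms(4) e0 by (simp add: anchored_box_def)
  then have "1 \<le> card (X \<inter> anchored_box (vec e))"
    using assms(1) by (metis One_nat_def Suc_leI card_gt_0_iff empty_iff finite_Int)
  then have c1: "1 / real k \<le> real (card (X \<inter> anchored_box (vec e))) / real (card X)"
    using assms(2,3) by (simp add: divide_right_mono)
  have "e ^ CARD('n) \<le> e ^ 1"
    using e0 by (intro power_decreasing) auto
  then have pe: "(\<Prod>i\<in>UNIV. (vec e::real^'n)$i) \<le> e" by simp
  have "\<bar>real (card (X \<inter> anchored_box (vec e))) / real (card X) - (\<Prod>i\<in>UNIV. (vec e::real^'n)$i)\<bar> \<le> star_discrepancy X"
    by (rule disc_ge[OF assms(1) q])
  then have "1 / real k - e \<le> star_discrepancy X" using c1 pe by (simp add: abs_if split: if_splits)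
  moreover have "e \<le> (1 / real k - star_discrepancy X) / 2" unfolding e_def by (rule min.cobounded2)
  ultimately show False using lt by argo
qed

lemma jswap_card:
  assumes "j_swap P S j S'" "finite P" "S \<subseteq> P"
  shows "\<exists>A B. A \<subseteq> S \<and> B \<subseteq> P - S \<and> card A = j \<and> card B = j \<and> S' = (S - A) \<union> B
           \<and> finite S' \<and> card S' = card S"
proof -
  obtain A B where h: "A \<subseteq> S" "B \<subseteq> P - S" "card A = j" "card B = j" "S' = (S - A) \<union> B"
    using assms(1) unfolding j_swap_def by blast
  have fS: "finite S" using assms finite_subset by blast
  have fA: "finite A" using h fS finite_subset by blast
  have fB: "finite B" using h assms(2) finite_subset by blast
  have "card S' = card (S - A) + card B"
    using h fS fB by (subst h(5), intro card_Un_disjoint) auto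
  also have "card (S - A) = card S - j" using h fA by (simp add: card_Diff_subset)
  also have "j \<le> card S" using h fS card_mono by metis
  ultimately have "card S' = card S" using h by simp
  then show ?thesis using h fS fB by blast
qed

lemma conclude:
  fixes P S S2 :: "(real^'n) set"
  assumes "finite P" "P \<subseteq> unit_cube" "card P = n" "S \<subseteq> P" "card S = k"
    "\<And>S'. j_swap P S j S' \<Longrightarrow> star_discrepancy S \<le> star_discrepancy S'"
    "S2 \<subseteq> P" "card S2 = k" "star_discrepancy S2 < star_discrepancy S"
  shows "\<exists>(P :: (real ^ 'n) set) S. finite P \<and> P \<subseteq> unit_cube \<and> card P = n \<and>
           S \<subseteq> P \<and> card S = k \<and>
           local_min_SDSSP P k j S \<and> \<not> global_min_SDSSP P k S"
  using assms unfolding local_min_SDSSP_def global_min_SDSSP_def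
  by (intro exI[of _ P] exI[of _ S]) (auto simp: not_less)

definition tA :: "nat \<Rightarrow> real" where "tA k = 1 - 1 / (2 * real k)"
definition tg :: "nat \<Rightarrow> nat \<Rightarrow> real" where "tg k m = (1 - tA k) / real (m - 1)"
definition ta :: "nat \<Rightarrow> nat \<Rightarrow> nat \<Rightarrow> real" where
  "ta k m i = (if i = 0 then 0 else tA k + real (i - 1) * tg k m)"
definition tb :: "nat \<Rightarrow> nat \<Rightarrow> nat \<Rightarrow> real" where
  "tb k m i = (if 1 \<le> i \<and> i \<le> m then tA k / ta k m i else 0)"

context
  fixes k m :: nat
  assumes km: "2 \<le> m" "m + 1 \<le> k"
begin

lemma A_pos: "0 < tA k" and A_lt1: "tA k < 1"
  using km by (auto simp: tA_def field_simps)

lemma g_pos: "0 < tg k m"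
  using km A_lt1 by (auto simp: tg_def)

lemma ta_Suc: "1 \<le> i \<Longrightarrow> ta k m (Suc i) = ta k m i + tg k m"
  by (auto simp: ta_def algebra_simps of_nat_diff)

lemma ta_1: "ta k m 1 = tA k" by (simp add: ta_def)
lemma ta_Suc0 [simp]: "ta k m (Suc 0) = tA k" by (simp add: ta_def)

lemma ta_m: "ta k m m = 1"
  using km by (auto simp: ta_def tg_def)

lemma ta_strict: "i < i' \<Longrightarrow> ta k m i < ta k m i'"
proof -
  assume "i < i'"
  show ?thesis
  proof (cases "i = 0")
    case True
    then show ?thesis using \<open>i < i'\<close> A_pos g_pos
      by (auto simp: ta_def intro!: add_pos_nonneg)
  next
    case False
    then have "real (i - 1) < real (i' - 1)" using \<open>i < i'\<close> by simp
    then show ?thesis using False \<open>i < i'\<close> g_pos by (auto simp: ta_def)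
  qed
qed

lemma ta_mono: "i \<le> i' \<Longrightarrow> ta k m i \<le> ta k m i'"
  using ta_strict by (cases "i = i'") (auto simp: less_imp_le)

lemma ta_ge_A: "1 \<le> i \<Longrightarrow> tA k \<le> ta k m i"
  using ta_mono[of 1 i] ta_1 by simp

lemma ta_pos: "1 \<le> i \<Longrightarrow> 0 < ta k m i"
  using ta_ge_A A_pos by (meson less_le_trans)

lemma ta_nonneg: "0 \<le> ta k m i"
  by (cases "i = 0") (auto simp: ta_def intro!: add_nonneg_nonneg A_pos[THEN less_imp_le] mult_nonneg_nonneg g_pos[THEN less_imp_le])

lemma ta_le1: "i \<le> m \<Longrightarrow> ta k m i \<le> 1"
  using ta_mono[of i m] ta_m by simp

lemma ta_le_1g: "i + 1 \<le> m \<Longrightarrow> ta k m i \<le> 1 - tg k m"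
proof -
  assume "i + 1 \<le> m"
  then have "ta k m i \<le> ta k m (m - 1)" by (intro ta_mono) simp
  moreover have "ta k m m = ta k m (m - 1) + tg k m"
    using km ta_Suc[of "m - 1"] by (simp add: Suc_diff_1)
  ultimately show ?thesis using ta_m by simp
qed

lemma tab: "1 \<le> i \<Longrightarrow> i \<le> m \<Longrightarrow> ta k m i * tb k m i = tA k"
  using ta_pos[of i] by (simp add: tb_def)

lemma tb_1: "tb k m 1 = 1"
  using km A_pos by (simp add: tb_def ta_1)

lemma tb_nonneg: "0 \<le> tb k m i"
  using ta_pos A_pos by (auto simp: tb_def intro: divide_nonneg_pos less_imp_le)

lemma tb_le1: "tb k m i \<le> 1"
  using ta_ge_A ta_pos by (auto simp: tb_def divide_le_eq_1)

lemma tb_strict: "1 \<le> i \<Longrightarrow> i < i' \<Longrightarrow> i \<le> m \<Longrightarrow> tb k m i' < tb k m i"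
proof -
  assume h: "1 \<le> i" "i < i'" "i \<le> m"
  have p: "0 < tb k m i" using h ta_pos A_pos by (simp add: tb_def)
  show ?thesis
  proof (cases "i' \<le> m")
    case True
    have "ta k m i < ta k m i'" using ta_strict[OF h(2)] .
    then show ?thesis using h True ta_pos[of i] ta_pos[of i'] A_pos
      by (simp add: tb_def divide_strict_left_mono)
  next
    case False
    then show ?thesis using p by (simp add: tb_def)
  qed
qed

lemma tb_anti: "1 \<le> i \<Longrightarrow> i \<le> i' \<Longrightarrow> tb k m i' \<le> tb k m i"
proof -
  assume h: "1 \<le> i" "i \<le> i'"
  show ?thesis
  proof (cases "i \<le> m")
    case True
    then show ?thesis using h tb_strict[of i i'] by (cases "i = i'") auto
  next
    case False
    then show ?thesis using h by (simp add: tb_def)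
  qed
qed

lemma stair_S:
  assumes x: "0 \<le> x" "x \<le> 1" and y: "0 \<le> y" "y \<le> 1"
    and h: "\<forall>l\<in>{1..m-1}. x \<le> ta k m l \<or> y \<le> tb k m (l+1)"
  shows "x * y \<le> tA k"
proof (cases "x \<le> ta k m 1")
  case True
  then have "x * y \<le> ta k m 1 * 1" using x y by (intro mult_mono) (auto simp: ta_1 A_pos less_imp_le)
  then show ?thesis by (simp add: ta_1)
next
  case False
  define L where "L = {l\<in>{1..m}. ta k m l < x}"
  have fL: "finite L" by (simp add: L_def)
  have "1 \<in> L" using False km by (auto simp: L_def)
  then have ne: "L \<noteq> {}" by blast
  define i where "i = Max L"
  have iL: "i \<in> L" using fL ne by (simp add: i_def)
  have "i \<noteq> m" using iL x ta_m by (auto simp: L_def)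
  then have i: "1 \<le> i" "i < m" using iL by (auto simp: L_def)
  have "i + 1 \<notin> L"
  proof
    assume "i + 1 \<in> L"
    then have "i + 1 \<le> i" using Max_ge[OF fL] i_def by blast
    then show False by simp
  qed
  then have x1: "x \<le> ta k m (i+1)" using i by (auto simp: L_def)
  have "\<not> x \<le> ta k m i" using iL by (auto simp: L_def)
  then have y1: "y \<le> tb k m (i+1)" using h i by auto
  have "x * y \<le> ta k m (i+1) * tb k m (i+1)"
    using x y x1 y1 by (intro mult_mono) (auto simp: ta_nonneg)
  also have "\<dots> = tA k" using i by (intro tab) auto
  finally show ?thesis .
qed

lemma stair_H:
  assumes x: "0 \<le> x" "x \<le> 1" and y: "0 \<le> y" "y \<le> 1"
    and h: "\<forall>l\<in>{1..m}. x \<le> ta k m (l-1) \<or> y \<le> tb k m (l+1)"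
  shows "x * y \<le> tA k * (1 - tg k m)"
proof -
  have B0: "0 \<le> tA k * (1 - tg k m)"
    using ta_le_1g[of 0] km A_pos by (simp add: ta_def)
  show ?thesis
  proof (cases "x \<le> 0")
    case True
    then have "x = 0" using x by simp
    then show ?thesis using B0 by simp
  next
    case False
    define L where "L = {l\<in>{1..m}. ta k m (l-1) < x}"
    have fL: "finite L" by (simp add: L_def)
    have "1 \<in> L" using False km by (auto simp: L_def ta_def)
    then have ne: "L \<noteq> {}" by blast
    define i where "i = Max L"
    have iL: "i \<in> L" using fL ne by (simp add: i_def)
    then have i: "1 \<le> i" "i \<le> m" by (auto simp: L_def)
    have "\<not> x \<le> ta k m (i-1)" using iL by (auto simp: L_def)
    then have y1: "y \<le> tb k m (i+1)" using h i by auto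
    show ?thesis
    proof (cases "i = m")
      case True
      then have "y \<le> 0" using y1 by (simp add: tb_def)
      then have "y = 0" using y by simp
      then show ?thesis using B0 by simp
    next
      case False
      then have im: "i < m" using i by simp
      have "i + 1 \<notin> L"
      proof
        assume "i + 1 \<in> L"
        then have "i + 1 \<le> i" using Max_ge[OF fL] i_def by blast
        then show False by simp
      qed
      then have x1: "x \<le> ta k m i" using im by (auto simp: L_def)
      have "x * y \<le> ta k m i * tb k m (i+1)"
        using x y x1 y1 by (intro mult_mono) (auto simp: ta_nonneg)
      also have "\<dots> = tA k * (ta k m i / ta k m (i+1))"
        using im i by (simp add: tb_def)
      also have "\<dots> \<le> tA k * (1 - tg k m)"
      proof (intro mult_left_mono)
        have p: "0 < ta k m (i+1)" using ta_pos by simp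
        have e: "ta k m (i+1) = ta k m i + tg k m" using ta_Suc[of i] i by simp
        have "ta k m (i+1) \<le> 1" using im by (intro ta_le1) simp
        then have "tg k m * ta k m (i+1) \<le> tg k m" using g_pos by (simp add: mult_left_le)
        then have "ta k m i \<le> (1 - tg k m) * ta k m (i+1)" using e by (simp add: algebra_simps)
        then show "ta k m i / ta k m (i+1) \<le> 1 - tg k m" using p by (simp add: divide_le_eq)
      qed (use A_pos in simp)
      finally show ?thesis .
    qed
  qed
qed

end

definition tp :: "nat \<Rightarrow> nat \<Rightarrow> 'n \<Rightarrow> 'n \<Rightarrow> nat \<Rightarrow> real^'n" where
  "tp k m i1 i2 l = lift i1 i2 (ta k m l) (tb k m (l+1))"
definition th :: "nat \<Rightarrow> nat \<Rightarrow> 'n \<Rightarrow> 'n \<Rightarrow> nat \<Rightarrow> real^'n" where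
  "th k m i1 i2 l = lift i1 i2 (ta k m (l-1)) (tb k m (l+1))"

context
  fixes k m :: nat and i1 i2 :: "'n::finite"
  assumes km: "2 \<le> m" "m + 1 \<le> k" and ii: "i1 \<noteq> i2"
begin

lemma tp_cube: "l \<le> m \<Longrightarrow> tp k m i1 i2 l \<in> unit_cube"
  unfolding tp_def using km by (intro lift_cube ta_nonneg ta_le1 tb_nonneg tb_le1) auto

lemma th_cube: "l \<le> m \<Longrightarrow> th k m i1 i2 l \<in> unit_cube"
  unfolding th_def using km by (intro lift_cube ta_nonneg ta_le1 tb_nonneg tb_le1) auto

lemma tp_notin_corner:
  assumes "1 \<le> l" "l \<le> m - 1" "1 \<le> i" "i \<le> m"
  shows "tp k m i1 i2 l \<notin> anchored_box (corner i1 i2 (ta k m i) (tb k m i))"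
proof
  assume "tp k m i1 i2 l \<in> anchored_box (corner i1 i2 (ta k m i) (tb k m i))"
  then have h: "ta k m l < ta k m i" "tb k m (l+1) < tb k m i"
    unfolding tp_def using lift_in_corner[OF ii] ta_nonneg[OF km] tb_nonneg[OF km] by auto
  have "l < i" using h(1) ta_mono[OF km, of i l] by (meson not_le not_less)
  moreover have "i < l + 1" using h(2) tb_anti[OF km, of "l+1" i] by (meson not_le not_less le_add2 order_trans)
  ultimately show False by simp
qed

lemma th_notin_corner:
  assumes "1 \<le> l" "l \<le> m" "1 \<le> i" "i \<le> m" "l \<noteq> i"
  shows "th k m i1 i2 l \<notin> anchored_box (corner i1 i2 (ta k m i) (tb k m i))"
proof
  assume "th k m i1 i2 l \<in> anchored_box (corner i1 i2 (ta k m i) (tb k m i))"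
  then have h: "ta k m (l-1) < ta k m i" "tb k m (l+1) < tb k m i"
    unfolding th_def using lift_in_corner[OF ii] ta_nonneg[OF km] tb_nonneg[OF km] by auto
  have "l - 1 < i" using h(1) ta_mono[OF km, of i "l-1"] by (meson not_le not_less)
  moreover have "i < l + 1" using h(2) tb_anti[OF km, of "l+1" i] by (meson not_le not_less le_add2 order_trans)
  ultimately show False using assms by linarith
qed

lemma ta_inj: "ta k m l = ta k m l' \<Longrightarrow> l = l'"
  using ta_strict[OF km, of l l'] ta_strict[OF km, of l' l] by (metis less_irrefl nat_neq_iff)

lemma inj_tp: "inj_on (tp k m i1 i2) {1..m-1}"
  by (auto simp: inj_on_def tp_def lift_inj[OF ii] dest: ta_inj)

lemma inj_th: "inj_on (th k m i1 i2) {1..m}"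
  by (auto simp: inj_on_def th_def lift_inj[OF ii] dest!: ta_inj)

lemma tp_ne_th: "1 \<le> l \<Longrightarrow> l \<le> m - 1 \<Longrightarrow> 1 \<le> i \<Longrightarrow> i \<le> m \<Longrightarrow> tp k m i1 i2 l \<noteq> th k m i1 i2 i"
proof
  assume h: "1 \<le> l" "l \<le> m - 1" "1 \<le> i" "i \<le> m" "tp k m i1 i2 l = th k m i1 i2 i"
  then have "ta k m l = ta k m (i-1)" "tb k m (l+1) = tb k m (i+1)"
    by (auto simp: tp_def th_def lift_inj[OF ii])
  then have "l = i - 1" "tb k m (l+1) = tb k m (i+1)" using ta_inj by auto
  then have "tb k m i = tb k m (i+1)" using h by simp
  moreover have "tb k m (i+1) < tb k m i" using h by (intro tb_strict[OF km]) auto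
  ultimately show False by simp
qed

lemma ta_ne1: "l < m \<Longrightarrow> ta k m l \<noteq> 1"
  using ta_strict[OF km, of l m] ta_m[OF km] by simp

lemma tp_ne_ivp: "l \<le> m - 1 \<Longrightarrow> tp k m i1 i2 l \<noteq> ivp i1 i2 r"
  unfolding tp_def using km by (intro lift_ne_ivp ta_ne1) auto

lemma th_ne_ivp: "1 \<le> l \<Longrightarrow> l \<le> m \<Longrightarrow> th k m i1 i2 l \<noteq> ivp i1 i2 r"
  unfolding th_def using km by (intro lift_ne_ivp ta_ne1) auto

end

lemma T_design:
  fixes k m n j :: nat and i1 i2 :: "'n::finite"
  assumes km: "2 \<le> m" "m + 1 \<le> k" and ii: "i1 \<noteq> i2" and kmn: "k + m \<le> n" and jm: "j < m"
  shows "\<exists>(P :: (real ^ 'n) set) S. finite P \<and> P \<subseteq> unit_cube \<and> card P = n \<and>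
           S \<subseteq> P \<and> card S = k \<and>
           local_min_SDSSP P k j S \<and> \<not> global_min_SDSSP P k S"
proof -
  define A where "A = tA k"
  define g where "g = tg k m"
  define Vs where "Vs = tp k m i1 i2 ` {1..m-1}"
  define Hs where "Hs = th k m i1 i2 ` {1..m}"
  define Iv where "Iv = (\<lambda>N. ivp i1 i2 ` {..<N})"
  define S where "S = Vs \<union> Iv (k+1-m)"
  define P where "P = Vs \<union> Hs \<union> Iv (n+1-2*m)"
  define S2 where "S2 = Hs \<union> Iv (k-m)"
  have A0: "0 < A" and A1: "A < 1" using A_pos[OF km] A_lt1[OF km] by (auto simp: A_def)
  have g0: "0 < g" using g_pos[OF km] by (simp add: g_def)
  have k0: "3 \<le> k" using km by simp
  have Aeq: "A = 1 - 1 / (2 * real k)" by (simp add: A_def tA_def)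
  have fVs: "finite Vs" and fHs: "finite Hs" and fIv: "\<And>N. finite (Iv N)"
    by (auto simp: Vs_def Hs_def Iv_def)
  have cVs: "card Vs = m - 1" unfolding Vs_def using card_image[OF inj_tp[OF km ii]] by simp
  have cHs: "card Hs = m" unfolding Hs_def using card_image[OF inj_th[OF km ii]] by simp
  have cIv: "\<And>N. card (Iv N) = N" unfolding Iv_def
    using card_image[OF inj_on_subset[OF inj_ivp[OF ii]]] by simp
  have VH: "Vs \<inter> Hs = {}" unfolding Vs_def Hs_def using tp_ne_th[OF km ii] by fastforce
  have VI: "\<And>N. Vs \<inter> Iv N = {}" unfolding Vs_def Iv_def using tp_ne_ivp[OF km ii] by fastforce
  have HI: "\<And>N. Hs \<inter> Iv N = {}" unfolding Hs_def Iv_def using th_ne_ivp[OF km ii] by fastforce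
  have Iv_mono: "\<And>N N'. N \<le> N' \<Longrightarrow> Iv N \<subseteq> Iv N'" unfolding Iv_def by auto
  have Iv_notin: "\<And>q x N. q \<in> unit_cube \<Longrightarrow> x \<in> Iv N \<Longrightarrow> x \<notin> anchored_box q"
    unfolding Iv_def using ivp_notin by blast
  have finP: "finite P" using fVs fHs fIv by (simp add: P_def)
  have cardS: "card S = k"
    unfolding S_def using fVs fIv VI km by (simp add: card_Un_disjoint cVs cIv)
  have cardP: "card P = n"
    unfolding P_def using fVs fHs fIv VI HI VH km kmn
    by (simp add: card_Un_disjoint cVs cHs cIv Int_Un_distrib2)
  have cardS2: "card S2 = k"
    unfolding S2_def using fHs fIv HI km by (simp add: card_Un_disjoint cHs cIv)
  have "k+1-m \<le> n+1-2*m" using kmn km by simp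
  then have SP: "S \<subseteq> P" unfolding S_def P_def using Iv_mono[of "k+1-m" "n+1-2*m"] by auto
  have "k-m \<le> n+1-2*m" using kmn km by simp
  then have S2P: "S2 \<subseteq> P" unfolding S2_def P_def using Iv_mono[of "k-m" "n+1-2*m"] by auto
  have Pcube: "P \<subseteq> unit_cube"
    unfolding P_def Vs_def Hs_def Iv_def using tp_cube[OF km ii] th_cube[OF km ii] ivp_cube by auto
  have finS: "finite S" using finP SP finite_subset by blast
  have finS2: "finite S2" using finP S2P finite_subset by blast
  have DS_le: "star_discrepancy S \<le> A"
  proof (rule disc_le)
    fix q :: "real^'n" assume q: "q \<in> unit_cube"
    have sub: "S \<inter> anchored_box q \<subseteq> Vs" unfolding S_def using Iv_notin[OF q] by blast
    then have "card (S \<inter> anchored_box q) \<le> m - 1" using card_mono[OF fVs sub] cVs by simp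
    then have "real (card (S \<inter> anchored_box q)) / real (card S) \<le> real (m - 1) / real k"
      using cardS k0 by (simp add: divide_right_mono)
    moreover have "real (m - 1) / real k \<le> A"
    proof -
      have e1: "real (m - 1) \<le> real k - 1" using km by (simp add: of_nat_diff)
      have "real (m-1) / real k \<le> (real k - 1) / real k" by (rule divide_right_mono[OF e1]) simp
      also have "(real k - 1) / real k = 1 - 1 / real k" using k0 by (simp add: field_simps)
      also have "\<dots> \<le> A" unfolding Aeq using k0 by (simp add: field_simps)
      finally show ?thesis .
    qed
    ultimately show "real (card (S \<inter> anchored_box q)) / real (card S) - (\<Prod>i\<in>UNIV. q$i) \<le> A"
      using prod_nonneg_cube[OF q] by linarith
    show "(\<Prod>i\<in>UNIV. q$i) - real (card (S \<inter> anchored_box q)) / real (card S) \<le> A"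
    proof (cases "card (S \<inter> anchored_box q) = 0")
      case False
      then have "1 / real k \<le> real (card (S \<inter> anchored_box q)) / real (card S)"
        using cardS k0 by (simp add: divide_right_mono)
      moreover have "1 - 1 / real k \<le> A" unfolding Aeq using k0 by (simp add: field_simps)
      ultimately show ?thesis using prod_le_one[OF q] by linarith
    next
      case True
      then have empty: "S \<inter> anchored_box q = {}" using finS by simp
      show ?thesis
      proof (cases "(\<Prod>i\<in>UNIV. q$i) = 0")
        case True
        have "0 \<le> real (card (S \<inter> anchored_box q)) / real (card S)" by simp
        then show ?thesis using True A0 by linarith
      next
        case False
        have h: "\<forall>l\<in>{1..m-1}. q$i1 \<le> ta k m l \<or> q$i2 \<le> tb k m (l+1)"
        proof
          fix l assume l: "l \<in> {1..m-1}"
          have "tp k m i1 i2 l \<notin> anchored_box q" using empty l unfolding S_def Vs_def by blast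
          then show "q$i1 \<le> ta k m l \<or> q$i2 \<le> tb k m (l+1)"
            using lift_notin_vol[OF q ii ta_nonneg[OF km] tb_nonneg[OF km]] False unfolding tp_def by blast
        qed
        have "q$i1 * q$i2 \<le> A" unfolding A_def
          using q h by (intro stair_S[OF km]) (auto simp: unit_cube_def)
        moreover have "0 \<le> real (card (S \<inter> anchored_box q)) / real (card S)" by simp
        ultimately show ?thesis using prod_le_two[OF q ii] by linarith
      qed
    qed
  qed
  have corner_empty: "\<And>i X. 1 \<le> i \<Longrightarrow> i \<le> m \<Longrightarrow> X \<subseteq> P \<Longrightarrow> th k m i1 i2 i \<notin> X \<Longrightarrow>
      X \<inter> anchored_box (corner i1 i2 (ta k m i) (tb k m i)) = {}"
  proof -
    fix i X assume i: "1 \<le> i" "i \<le> m" and X: "X \<subseteq> P" "th k m i1 i2 i \<notin> X"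
    have qc: "corner i1 i2 (ta k m i) (tb k m i) \<in> unit_cube"
      using i by (intro corner_cube ta_nonneg[OF km] ta_le1[OF km] tb_nonneg[OF km] tb_le1[OF km])
    show "X \<inter> anchored_box (corner i1 i2 (ta k m i) (tb k m i)) = {}"
    proof (rule ccontr)
      assume "X \<inter> anchored_box (corner i1 i2 (ta k m i) (tb k m i)) \<noteq> {}"
      then obtain x where x: "x \<in> X" "x \<in> anchored_box (corner i1 i2 (ta k m i) (tb k m i))" by blast
      then have "x \<in> P" using X by blast
      then consider (a) l where "l \<in> {1..m-1}" "x = tp k m i1 i2 l"
        | (b) l where "l \<in> {1..m}" "x = th k m i1 i2 l" | (c) "x \<in> Iv (n+1-2*m)"
        unfolding P_def Vs_def Hs_def by blast
      then show False
      proof cases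
        case a then show ?thesis using x tp_notin_corner[OF km ii, of l i] i by auto
      next
        case b
        then have "l \<noteq> i" using X x by auto
        then show ?thesis using b x th_notin_corner[OF km ii, of l i] i by auto
      next
        case c then show ?thesis using x Iv_notin[OF qc] by blast
      qed
    qed
  qed
  have corner_val: "\<And>i X. 1 \<le> i \<Longrightarrow> i \<le> m \<Longrightarrow> X \<subseteq> P \<Longrightarrow> th k m i1 i2 i \<notin> X \<Longrightarrow>
      A \<le> star_discrepancy X"
  proof -
    fix i X assume i: "1 \<le> i" "i \<le> m" and X: "X \<subseteq> P" "th k m i1 i2 i \<notin> X"
    have qc: "corner i1 i2 (ta k m i) (tb k m i) \<in> unit_cube"
      using i by (intro corner_cube ta_nonneg[OF km] ta_le1[OF km] tb_nonneg[OF km] tb_le1[OF km])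
    have fX: "finite X" using X finP finite_subset by blast
    have "\<bar>real (card (X \<inter> anchored_box (corner i1 i2 (ta k m i) (tb k m i)))) / real (card X)
            - (\<Prod>ii\<in>UNIV. corner i1 i2 (ta k m i) (tb k m i) $ ii)\<bar> \<le> star_discrepancy X"
      by (rule disc_ge[OF fX qc])
    moreover have "(\<Prod>ii\<in>UNIV. corner i1 i2 (ta k m i) (tb k m i) $ ii) = A"
      using corner_prod[OF ii] tab[OF km i] by (simp add: A_def)
    ultimately show "A \<le> star_discrepancy X" using corner_empty[OF i X] A0 by simp
  qed
  have "th k m i1 i2 1 \<in> Hs" unfolding Hs_def using km by auto
  then have th1: "th k m i1 i2 1 \<notin> S" using VH HI unfolding S_def by blast
  have DS: "star_discrepancy S = A"
    using DS_le corner_val[of 1 S] SP th1 km by simp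
  have nb: "\<And>S'. j_swap P S j S' \<Longrightarrow> star_discrepancy S \<le> star_discrepancy S'"
  proof -
    fix S' assume sw: "j_swap P S j S'"
    obtain A' B where AB: "A' \<subseteq> S" "B \<subseteq> P - S" "card A' = j" "card B = j" "S' = (S - A') \<union> B"
      using jswap_card[OF sw finP SP] by blast
    have fB: "finite B" using AB finP finite_subset by blast
    have "\<not> Hs \<subseteq> B"
    proof
      assume "Hs \<subseteq> B"
      then have "m \<le> j" using card_mono[OF fB] cHs AB by fastforce
      then show False using jm by simp
    qed
    then obtain i where i: "i \<in> {1..m}" "th k m i1 i2 i \<notin> B" unfolding Hs_def by blast
    have "th k m i1 i2 i \<notin> S" unfolding S_def using VH HI i unfolding Hs_def by blast
    then have "th k m i1 i2 i \<notin> S'" using AB i by blast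
    moreover have "S' \<subseteq> P" using AB SP by blast
    ultimately have "A \<le> star_discrepancy S'" using corner_val[of i S'] i by auto
    then show "star_discrepancy S \<le> star_discrepancy S'" using DS by simp
  qed
  define \<theta> where "\<theta> = max (1 - g) (tb k m 2)"
  define Bd where "Bd = max (A * (1 - g)) (max (1 - 2 / real k) (max (\<theta> - 1 / real k) ((real k - 1) / real k)))"
  have th_lt: "\<theta> < 1"
  proof -
    have "tb k m 2 < tb k m 1" using km by (intro tb_strict[OF km]) auto
    then show ?thesis using g0 tb_1[OF km] by (simp add: \<theta>_def)
  qed
  have Bd_lt: "Bd < A"
  proof -
    have h1: "1 / (2 * real k) < 1 / real k" using k0 by (simp add: field_simps)
    have h2: "1 / real k < 2 / real k" using k0 by (simp add: divide_strict_right_mono)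
    have h3: "(real k - 1) / real k = 1 - 1 / real k" using k0 by (simp add: field_simps)
    have h4: "A * (1 - g) < A" using A0 g0 by simp
    show ?thesis unfolding Bd_def max_less_iff_conj using h1 h2 h3 h4 th_lt unfolding Aeq by linarith
  qed
  have DS2: "star_discrepancy S2 \<le> Bd"
  proof (rule disc_le)
    fix q :: "real^'n" assume q: "q \<in> unit_cube"
    have sub: "S2 \<inter> anchored_box q \<subseteq> Hs" unfolding S2_def using Iv_notin[OF q] by blast
    then have cle: "card (S2 \<inter> anchored_box q) \<le> m" using card_mono[OF fHs sub] cHs by simp
    then have "real (card (S2 \<inter> anchored_box q)) / real (card S2) \<le> real m / real k"
      using cardS2 k0 by (simp add: divide_right_mono)
    moreover have "real m / real k \<le> (real k - 1) / real k" using km k0 by (simp add: divide_right_mono)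
    ultimately show "real (card (S2 \<inter> anchored_box q)) / real (card S2) - (\<Prod>i\<in>UNIV. q$i) \<le> Bd"
      using prod_nonneg_cube[OF q] unfolding Bd_def by linarith
    show "(\<Prod>i\<in>UNIV. q$i) - real (card (S2 \<inter> anchored_box q)) / real (card S2) \<le> Bd"
    proof (cases "Hs \<subseteq> anchored_box q")
      case True
      then have hs: "Hs \<subseteq> S2 \<inter> anchored_box q" unfolding S2_def by blast
      have "m \<le> card (S2 \<inter> anchored_box q)" using card_mono[OF _ hs] finS2 cHs by simp
      then have "2 / real k \<le> real (card (S2 \<inter> anchored_box q)) / real (card S2)"
        using cardS2 k0 km by (simp add: divide_right_mono)
      then show ?thesis using prod_le_one[OF q] unfolding Bd_def by linarith
    next
      case False
      then obtain i where i: "i \<in> {1..m}" "th k m i1 i2 i \<notin> anchored_box q" unfolding Hs_def by blast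
      have "(\<Prod>i\<in>UNIV. q$i) \<le> max (ta k m (i-1)) (tb k m (i+1))"
        using lift_notin_vol2[OF q ii ta_nonneg[OF km] tb_nonneg[OF km]] i unfolding th_def by blast
      moreover have "ta k m (i-1) \<le> 1 - g" using i km unfolding g_def by (intro ta_le_1g[OF km]) auto
      moreover have "tb k m (i+1) \<le> tb k m 2" using i by (intro tb_anti[OF km]) auto
      ultimately have pt: "(\<Prod>i\<in>UNIV. q$i) \<le> \<theta>" unfolding \<theta>_def by linarith
      show ?thesis
      proof (cases "card (S2 \<inter> anchored_box q) = 0")
        case False
        then have "1 / real k \<le> real (card (S2 \<inter> anchored_box q)) / real (card S2)"
          using cardS2 k0 by (simp add: divide_right_mono)
        then show ?thesis using pt unfolding Bd_def by linarith
      next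
        case True
        then have empty: "S2 \<inter> anchored_box q = {}" using finS2 by simp
        show ?thesis
        proof (cases "(\<Prod>i\<in>UNIV. q$i) = 0")
          case True
          have "0 \<le> A * (1 - g)" using A0 ta_le_1g[OF km, of 0] km by (simp add: g_def ta_def)
          moreover have "0 \<le> real (card (S2 \<inter> anchored_box q)) / real (card S2)" by simp
          ultimately show ?thesis using True unfolding Bd_def by linarith
        next
          case False
          have h: "\<forall>l\<in>{1..m}. q$i1 \<le> ta k m (l-1) \<or> q$i2 \<le> tb k m (l+1)"
          proof
            fix l assume l: "l \<in> {1..m}"
            have "th k m i1 i2 l \<notin> anchored_box q" using empty l unfolding S2_def Hs_def by blast
            then show "q$i1 \<le> ta k m (l-1) \<or> q$i2 \<le> tb k m (l+1)"
              using lift_notin_vol[OF q ii ta_nonneg[OF km] tb_nonneg[OF km]] False unfolding th_def by blast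
          qed
          have "q$i1 * q$i2 \<le> A * (1 - g)" unfolding A_def g_def
            using q h by (intro stair_H[OF km]) (auto simp: unit_cube_def)
          moreover have "0 \<le> real (card (S2 \<inter> anchored_box q)) / real (card S2)" by simp
          ultimately show ?thesis using prod_le_two[OF q ii] unfolding Bd_def by linarith
        qed
      qed
    qed
  qed
  have lt: "star_discrepancy S2 < star_discrepancy S" using DS2 Bd_lt DS by linarith
  show ?thesis
    by (rule conclude[OF finP Pcube cardP SP cardS nb S2P cardS2 lt])
qed

lemma nb_inv:
  fixes P S X :: "(real^'n) set"
  assumes fP: "finite P" and SP: "S \<subseteq> P" and cS: "card S = k" and jk: "j + 1 = k"
    and PS: "P - S \<subseteq> range (ivp i1 i2)" and sw: "j_swap P S j X"
  shows "1 - 1 / real k \<le> star_discrepancy X"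
proof -
  obtain A B where AB: "A \<subseteq> S" "B \<subseteq> P - S" "card A = j" "card B = j" "X = (S - A) \<union> B"
    "finite X" "card X = card S"
    using jswap_card[OF sw fP SP] by blast
  have fS: "finite S" using fP SP finite_subset by blast
  have fA: "finite A" using AB fS finite_subset by blast
  have c1: "card (S - A) = 1" using AB fA cS jk by (simp add: card_Diff_subset)
  have q1: "(vec 1 :: real^'n) \<in> unit_cube" by (rule vec_cube) auto
  have "X \<inter> anchored_box (vec 1) \<subseteq> S - A"
    using AB PS ivp_notin[OF q1] by blast
  then have "card (X \<inter> anchored_box (vec 1)) \<le> 1"
    using card_mono[of "S - A"] fS c1 by (metis finite_Diff)
  then show ?thesis using one_visible[of X k] AB cS jk by simp
qed

lemma bern: "3/4 \<le> (1 - 1 / (4 * real CARD('n::finite))) ^ CARD('n)"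
proof -
  have "1 + real CARD('n) * (- (1 / (4 * real CARD('n)))) \<le> (1 + - (1 / (4 * real CARD('n)))) ^ CARD('n)"
  proof (rule Bernoulli_inequality)
    have "0 < CARD('n)" by simp
    then have "1 \<le> real CARD('n)" by linarith
    then have "1 \<le> 4 * real CARD('n)" by linarith
    then have "1 / (4 * real CARD('n)) \<le> 1" by simp
    then show "- 1 \<le> - (1 / (4 * real CARD('n)))" by linarith
  qed
  moreover have "1 + real CARD('n) * (- (1 / (4 * real CARD('n)))) = 3/4" by simp
  ultimately show ?thesis by simp
qed

lemma C_design:
  fixes k n j :: nat and i1 i2 :: "'n::finite"
  assumes k4: "4 \<le> k" and kn: "2 * k \<le> n" and jk: "j + 1 = k" and ii: "i1 \<noteq> i2"
  shows "\<exists>(P :: (real ^ 'n) set) S. finite P \<and> P \<subseteq> unit_cube \<and> card P = n \<and>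
           S \<subseteq> P \<and> card S = k \<and>
           local_min_SDSSP P k j S \<and> \<not> global_min_SDSSP P k S"
proof -
  define e where "e = (\<lambda>i::nat. lift i1 i2 (real i / (4 * real k)) 0)"
  define E where "E = (\<lambda>N. e ` {..<N})"
  define Iv where "Iv = (\<lambda>N. ivp i1 i2 ` {..<N})"
  define S where "S = E (k-1) \<union> Iv 1"
  define P where "P = E (k-1) \<union> Iv (n-k+1)"
  define S2 where "S2 = E (k-2) \<union> Iv 2"
  define t where "t = 1 / real k"
  have t0: "0 < t" "t \<le> 1/4" using k4 by (auto simp: t_def field_simps)
  have inje: "inj e" unfolding e_def inj_def using k4 by (auto simp: lift_inj[OF ii])
  have cE: "\<And>N. card (E N) = N" unfolding E_def using card_image[OF inj_on_subset[OF inje]] by simp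
  have cIv: "\<And>N. card (Iv N) = N" unfolding Iv_def
    using card_image[OF inj_on_subset[OF inj_ivp[OF ii]]] by simp
  have ex: "\<And>i. i < k \<Longrightarrow> real i / (4 * real k) \<le> 1/4" using k4 by (simp add: field_simps)
  have ex0: "\<And>i. 0 \<le> real i / (4 * real k)" by simp
  have EI: "\<And>N M. N \<le> k \<Longrightarrow> E N \<inter> Iv M = {}"
    unfolding E_def Iv_def e_def using ex by (fastforce simp: lift_ne_ivp)
  have Emono: "\<And>N M. N \<le> M \<Longrightarrow> E N \<subseteq> E M" unfolding E_def by auto
  have Imono: "\<And>N M. N \<le> M \<Longrightarrow> Iv N \<subseteq> Iv M" unfolding Iv_def by auto
  have fE: "\<And>N. finite (E N)" and fI: "\<And>N. finite (Iv N)" by (auto simp: E_def Iv_def)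
  have Iv_notin: "\<And>q x N. q \<in> unit_cube \<Longrightarrow> x \<in> Iv N \<Longrightarrow> x \<notin> anchored_box q"
    unfolding Iv_def using ivp_notin by blast
  have finP: "finite P" by (simp add: P_def fE fI)
  have cardS: "card S = k" unfolding S_def using EI[of "k-1" 1] k4 by (simp add: card_Un_disjoint fE fI cE cIv)
  have cardP: "card P = n" unfolding P_def using EI[of "k-1" "n-k+1"] k4 kn by (simp add: card_Un_disjoint fE fI cE cIv)
  have cardS2: "card S2 = k" unfolding S2_def using EI[of "k-2" 2] k4 by (simp add: card_Un_disjoint fE fI cE cIv)
  have SP: "S \<subseteq> P" unfolding S_def P_def using Imono[of 1 "n-k+1"] kn by auto
  have "2 \<le> n-k+1" "k-2 \<le> k-1" using kn k4 by auto
  then have S2P: "S2 \<subseteq> P" unfolding S2_def P_def using Imono[of 2 "n-k+1"] Emono[of "k-2" "k-1"] by auto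
  have Pcube: "P \<subseteq> unit_cube" unfolding P_def E_def Iv_def e_def
    using ex ex0 ivp_cube k4 by (auto intro!: lift_cube)
  have finS: "finite S" and finS2: "finite S2" using finP SP S2P finite_subset by blast+
  have PS: "P - S \<subseteq> range (ivp i1 i2)" unfolding P_def S_def Iv_def by auto
  have e0: "e 0 = vec 0" by (simp add: e_def lift00)
  have kt: "\<And>c. real c / real k = real c * t" by (simp add: t_def)
  have DS_le: "star_discrepancy S \<le> 1 - t"
  proof (rule disc_le)
    fix q :: "real^'n" assume q: "q \<in> unit_cube"
    have sub: "S \<inter> anchored_box q \<subseteq> E (k-1)" unfolding S_def using Iv_notin[OF q] by blast
    then have "card (S \<inter> anchored_box q) \<le> k - 1" using card_mono[OF fE sub] cE by simp
    then have "real (card (S \<inter> anchored_box q)) \<le> real k - 1" using k4 by linarith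
    then have "real (card (S \<inter> anchored_box q)) * t \<le> (real k - 1) * t" using t0 by (intro mult_right_mono) auto
    moreover have "(real k - 1) * t = 1 - t" using k4 by (simp add: t_def field_simps)
    ultimately show "real (card (S \<inter> anchored_box q)) / real (card S) - (\<Prod>i\<in>UNIV. q$i) \<le> 1 - t"
      using prod_nonneg_cube[OF q] cardS kt by simp
    show "(\<Prod>i\<in>UNIV. q$i) - real (card (S \<inter> anchored_box q)) / real (card S) \<le> 1 - t"
    proof (cases "vec 0 \<in> anchored_box q")
      case True
      have "(0::nat) \<in> {..<k-1}" using k4 by simp
      then have "e 0 \<in> E (k-1)" unfolding E_def by blast
      then have "vec 0 \<in> S \<inter> anchored_box q" using True e0 unfolding S_def by simp
      then have "1 \<le> card (S \<inter> anchored_box q)" using finS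
        by (metis One_nat_def Suc_leI card_gt_0_iff empty_iff finite_Int)
      then have "t \<le> real (card (S \<inter> anchored_box q)) * t" using t0 by simp
      then show ?thesis using prod_le_one[OF q] cardS kt by simp
    next
      case False
      then have "(\<Prod>i\<in>UNIV. q$i) = 0" by (rule origin_notin_vol[OF q])
      moreover have "0 \<le> real (card (S \<inter> anchored_box q)) / real (card S)" by simp
      ultimately show ?thesis using t0 by linarith
    qed
  qed
  have DS_ge: "1 - t - t/2 \<le> star_discrepancy S"
  proof -
    define q where "q = corner i1 i2 1 (t/2)"
    have q: "q \<in> unit_cube" unfolding q_def using t0 by (intro corner_cube) auto
    have "S \<inter> anchored_box q = E (k-1)"
    proof
      show "S \<inter> anchored_box q \<subseteq> E (k-1)" unfolding S_def using Iv_notin[OF q] by blast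
      show "E (k-1) \<subseteq> S \<inter> anchored_box q"
      proof
        fix x assume "x \<in> E (k-1)"
        then obtain i where i: "i < k - 1" "x = e i" unfolding E_def by blast
        have "real i / (4 * real k) < 1" using ex[of i] i by simp
        then have "x \<in> anchored_box q" unfolding q_def i e_def using t0
          by (simp add: lift_in_corner[OF ii])
        then show "x \<in> S \<inter> anchored_box q" using \<open>x \<in> E (k-1)\<close> unfolding S_def by blast
      qed
    qed
    then have c: "card (S \<inter> anchored_box q) = k - 1" using cE by simp
    have p: "(\<Prod>i\<in>UNIV. q$i) = t/2" unfolding q_def by (simp add: corner_prod[OF ii])
    have "\<bar>real (card (S \<inter> anchored_box q)) / real (card S) - (\<Prod>i\<in>UNIV. q$i)\<bar> \<le> star_discrepancy S"
      by (rule disc_ge[OF finS q])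
    moreover have "real (card (S \<inter> anchored_box q)) / real (card S) = 1 - t"
      using c cardS k4 by (simp add: t_def of_nat_diff field_simps)
    ultimately show ?thesis using p t0 by (simp add: abs_if split: if_splits)
  qed
  have nb: "\<And>S'. j_swap P S j S' \<Longrightarrow> star_discrepancy S \<le> star_discrepancy S'"
  proof -
    fix S' assume sw: "j_swap P S j S'"
    have "1 - 1 / real k \<le> star_discrepancy S'" by (rule nb_inv[OF finP SP cardS jk PS sw])
    then show "star_discrepancy S \<le> star_discrepancy S'" using DS_le by (simp add: t_def)
  qed
  have DS2: "star_discrepancy S2 \<le> max (1 - 2 * t) (max (2 * t) (1/4))"
  proof (rule disc_le)
    fix q :: "real^'n" assume q: "q \<in> unit_cube"
    have sub: "S2 \<inter> anchored_box q \<subseteq> E (k-2)" unfolding S2_def using Iv_notin[OF q] by blast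
    then have "card (S2 \<inter> anchored_box q) \<le> k - 2" using card_mono[OF fE sub] cE by simp
    then have "real (card (S2 \<inter> anchored_box q)) \<le> real k - 2" using k4 by linarith
    then have "real (card (S2 \<inter> anchored_box q)) * t \<le> (real k - 2) * t" using t0 by (intro mult_right_mono) auto
    moreover have "(real k - 2) * t = 1 - 2 * t" using k4 by (simp add: t_def field_simps)
    ultimately show "real (card (S2 \<inter> anchored_box q)) / real (card S2) - (\<Prod>i\<in>UNIV. q$i) \<le> max (1 - 2 * t) (max (2 * t) (1/4))"
      using prod_nonneg_cube[OF q] cardS2 kt by simp
    show "(\<Prod>i\<in>UNIV. q$i) - real (card (S2 \<inter> anchored_box q)) / real (card S2) \<le> max (1 - 2 * t) (max (2 * t) (1/4))"
    proof (cases "E (k-2) \<subseteq> anchored_box q")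
      case True
      then have es: "E (k-2) \<subseteq> S2 \<inter> anchored_box q" unfolding S2_def by blast
      have "k - 2 \<le> card (S2 \<inter> anchored_box q)" using card_mono[OF _ es] finS2 cE by simp
      then have "real k - 2 \<le> real (card (S2 \<inter> anchored_box q))" using k4 by linarith
      then have "(real k - 2) * t \<le> real (card (S2 \<inter> anchored_box q)) * t" using t0 by (intro mult_right_mono) auto
      moreover have "(real k - 2) * t = 1 - 2 * t" using k4 by (simp add: t_def field_simps)
      ultimately show ?thesis using prod_le_one[OF q] cardS2 kt by simp
    next
      case False
      then obtain i where i: "i < k - 2" "e i \<notin> anchored_box q" unfolding E_def by blast
      have "(\<Prod>i\<in>UNIV. q$i) \<le> max (real i / (4 * real k)) 0"
        using lift_notin_vol2[OF q ii ex0[of i] order_refl[of "0::real"]] i(2) unfolding e_def by blast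
      moreover have "real i / (4 * real k) \<le> 1/4" using ex[of i] i by simp
      moreover have "0 \<le> real (card (S2 \<inter> anchored_box q)) / real (card S2)" by simp
      moreover have "1/4 \<le> max (1 - 2 * t) (max (2 * t) (1 / 4))"
        using max.cobounded2[of "2*t" "1/4::real"] max.cobounded2[of "1-2*t" "max (2*t) (1/4)"] by linarith
      ultimately show ?thesis by linarith
    qed
  qed
  have lt: "star_discrepancy S2 < star_discrepancy S"
  proof -
    have "max (1 - 2 * t) (max (2 * t) (1/4)) < 1 - t - t/2" using t0 by simp
    then show ?thesis using DS2 DS_ge by linarith
  qed
  show ?thesis by (rule conclude[OF finP Pcube cardP SP cardS nb S2P cardS2 lt])
qed

lemma card_ge1: "finite X \<Longrightarrow> x \<in> X \<Longrightarrow> 1 \<le> card X"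
  by (metis One_nat_def Suc_leI card_gt_0_iff empty_iff)

lemma D3_design:
  fixes n :: nat and i1 i2 :: "'n::finite"
  assumes n6: "6 \<le> n" and ii: "i1 \<noteq> i2"
  shows "\<exists>(P :: (real ^ 'n) set) S. finite P \<and> P \<subseteq> unit_cube \<and> card P = n \<and>
           S \<subseteq> P \<and> card S = 3 \<and>
           local_min_SDSSP P 3 2 S \<and> \<not> global_min_SDSSP P 3 S"
proof -
  define d where "d = real CARD('n)"
  have d2: "2 \<le> d" unfolding d_def
  proof -
    have "i1 \<in> UNIV" "i2 \<in> UNIV" by auto
    then have "card {i1, i2} \<le> CARD('n)" by (intro card_mono) auto
    then show "2 \<le> real CARD('n)" using ii by simp
  qed
  define m0 where "m0 = 1 / (16 * d)"
  define c0 where "c0 = 1 - 1 / (4 * d)"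
  have m0p: "0 < m0" "m0 < 1 / (8 * d)" using d2 by (auto simp: m0_def field_simps)
  have c0b: "7/8 \<le> c0" "c0 < 1" using d2 by (auto simp: c0_def field_simps)
  have d8: "1 / (8 * d) \<le> 1/16" using d2 by (simp add: field_simps)
  have cpow: "3/4 \<le> c0 ^ CARD('n)" unfolding c0_def d_def by (rule bern)
  define Iv where "Iv = (\<lambda>N. ivp i1 i2 ` {..<N})"
  define Zo where "Zo = (vec 0 :: real^'n)"
  define Mm where "Mm = (vec m0 :: real^'n)"
  define Cc where "Cc = (vec c0 :: real^'n)"
  define S where "S = {Zo, Mm, Cc}"
  define P where "P = S \<union> Iv (n-3)"
  define S2 where "S2 = {Zo, Cc, ivp i1 i2 0}"
  have dist: "Zo \<noteq> Mm" "Zo \<noteq> Cc" "Mm \<noteq> Cc" using m0p c0b d8 by (auto simp: Zo_def Mm_def Cc_def vec_eq_iff)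
  have nI1: "\<And>r. Zo \<noteq> ivp i1 i2 r" unfolding Zo_def by (rule vec_ne_ivp) simp
  have nI2: "\<And>r. Mm \<noteq> ivp i1 i2 r" unfolding Mm_def using m0p d8 by (intro vec_ne_ivp) simp
  have nI3: "\<And>r. Cc \<noteq> ivp i1 i2 r" unfolding Cc_def using c0b by (intro vec_ne_ivp) simp
  note nI = nI1 nI2 nI3
  have cIv: "\<And>N. card (Iv N) = N" unfolding Iv_def
    using card_image[OF inj_on_subset[OF inj_ivp[OF ii]]] by simp
  have fI: "\<And>N. finite (Iv N)" by (simp add: Iv_def)
  have SI: "S \<inter> Iv N = {}" for N unfolding S_def Iv_def using nI by auto
  have Iv_notin: "\<And>q x N. q \<in> unit_cube \<Longrightarrow> x \<in> Iv N \<Longrightarrow> x \<notin> anchored_box q"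
    unfolding Iv_def using ivp_notin by blast
  have cardS: "card S = 3" unfolding S_def using dist by simp
  have finS: "finite S" by (simp add: S_def)
  have finP: "finite P" by (simp add: P_def finS fI)
  have cardP: "card P = n" unfolding P_def using SI n6 cardS by (simp add: card_Un_disjoint finS fI cIv)
  have cardS2: "card S2 = 3" unfolding S2_def using dist nI by simp
  have SP: "S \<subseteq> P" by (simp add: P_def)
  have S2P: "S2 \<subseteq> P" unfolding S2_def P_def S_def Iv_def using n6 by auto
  have Pcube: "P \<subseteq> unit_cube" unfolding P_def S_def Iv_def Zo_def Mm_def Cc_def
    using m0p c0b d8 ivp_cube by (auto intro!: vec_cube simp: unit_cube_def)
  have finS2: "finite S2" by (simp add: S2_def)
  have PS: "P - S \<subseteq> range (ivp i1 i2)" unfolding P_def Iv_def by auto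
  have Oin: "\<And>q. Zo \<in> anchored_box q \<longleftrightarrow> (\<forall>i. 0 < q$i)" unfolding Zo_def by (auto simp: anchored_box_def)
  have Cin: "\<And>q. Cc \<in> anchored_box q \<longleftrightarrow> (\<forall>i. c0 < q$i)" unfolding Cc_def using c0b by (simp add: vec_in_box)
  have C_pow: "\<And>q. q \<in> unit_cube \<Longrightarrow> Cc \<in> anchored_box q \<Longrightarrow> 3/4 \<le> (\<Prod>i\<in>UNIV. q$i)"
  proof -
    fix q :: "real^'n" assume q: "q \<in> unit_cube" and "Cc \<in> anchored_box q"
    then have "\<forall>i. c0 \<le> q$i" using Cin by (simp add: less_imp_le)
    then have "c0 ^ CARD('n) \<le> (\<Prod>i\<in>UNIV. q$i)" using c0b by (intro prod_ge_pow) auto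
    then show "3/4 \<le> (\<Prod>i\<in>UNIV. q$i)" using cpow by linarith
  qed
  have C_O: "\<And>q. Cc \<in> anchored_box q \<Longrightarrow> Zo \<in> anchored_box q"
  proof -
    fix q :: "real^'n" assume "Cc \<in> anchored_box q"
    then have "\<forall>i. c0 < q$i" using Cin by simp
    then have "\<forall>i. 0 < q$i" using c0b by (metis less_trans zero_less_numeral divide_pos_pos order.strict_trans2)
    then show "Zo \<in> anchored_box q" using Oin by simp
  qed
  have DS_le: "star_discrepancy S \<le> 2/3"
  proof (rule disc_le)
    fix q :: "real^'n" assume q: "q \<in> unit_cube"
    show "real (card (S \<inter> anchored_box q)) / real (card S) - (\<Prod>i\<in>UNIV. q$i) \<le> 2/3"
    proof (cases "Cc \<in> anchored_box q")
      case True
      have "card (S \<inter> anchored_box q) \<le> 3" using card_mono[OF finS, of "S \<inter> anchored_box q"] cardS by simp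
      then show ?thesis using C_pow[OF q True] cardS by simp
    next
      case False
      then have sb: "S \<inter> anchored_box q \<subseteq> {Zo, Mm}" unfolding S_def by blast
      have "card (S \<inter> anchored_box q) \<le> card {Zo, Mm}" by (rule card_mono[OF _ sb]) simp
      then have "card (S \<inter> anchored_box q) \<le> 2" using dist by simp
      then show ?thesis using prod_nonneg_cube[OF q] cardS by simp
    qed
    show "(\<Prod>i\<in>UNIV. q$i) - real (card (S \<inter> anchored_box q)) / real (card S) \<le> 2/3"
    proof (cases "Zo \<in> anchored_box q")
      case True
      have zin: "Zo \<in> S \<inter> anchored_box q" using True by (simp add: S_def)
      have "1 \<le> card (S \<inter> anchored_box q)" using card_ge1[OF _ zin] finS by simp
      then show ?thesis using prod_le_one[OF q] cardS by simp
    next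
      case False
      then have "(\<Prod>i\<in>UNIV. q$i) = 0" unfolding Zo_def by (rule origin_notin_vol[OF q])
      moreover have "0 \<le> real (card (S \<inter> anchored_box q)) / real (card S)" by simp
      ultimately show ?thesis by linarith
    qed
  qed
  have DS_ge: "2/3 - 1 / (8 * d) \<le> star_discrepancy S"
  proof -
    define q where "q = corner i1 i2 (1 / (8 * d)) 1"
    have q: "q \<in> unit_cube" unfolding q_def using d2 by (intro corner_cube) auto
    have qv: "\<And>i. q$i = (if i = i1 then 1 / (8 * d) else 1)" unfolding q_def corner_def by simp
    have "Zo \<in> anchored_box q" using Oin qv d2 by auto
    moreover have "Mm \<in> anchored_box q"
    proof -
      have "\<forall>i. m0 < q$i" using m0p d8 qv by auto
      then show ?thesis unfolding Mm_def using m0p by (simp add: vec_in_box)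
    qed
    moreover have "Cc \<notin> anchored_box q"
    proof -
      have "\<not> c0 < q$i1" using qv c0b d8 by simp
      then show ?thesis using Cin by blast
    qed
    ultimately have "S \<inter> anchored_box q = {Zo, Mm}" unfolding S_def by auto
    then have c: "card (S \<inter> anchored_box q) = 2" using dist by simp
    have p: "(\<Prod>i\<in>UNIV. q$i) = 1 / (8 * d)" unfolding q_def by (simp add: corner_prod[OF ii])
    have "\<bar>real (card (S \<inter> anchored_box q)) / real (card S) - (\<Prod>i\<in>UNIV. q$i)\<bar> \<le> star_discrepancy S"
      by (rule disc_ge[OF finS q])
    then show ?thesis using c p cardS d8 by (simp add: abs_if split: if_splits)
  qed
  have nb: "\<And>S'. j_swap P S 2 S' \<Longrightarrow> star_discrepancy S \<le> star_discrepancy S'"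
  proof -
    fix S' assume sw: "j_swap P S 2 S'"
    have "1 - 1 / real 3 \<le> star_discrepancy S'" by (rule nb_inv[OF finP SP cardS _ PS sw]) simp
    then show "star_discrepancy S \<le> star_discrepancy S'" using DS_le by simp
  qed
  have DS2: "star_discrepancy S2 \<le> c0 - 1/3"
  proof (rule disc_le)
    fix q :: "real^'n" assume q: "q \<in> unit_cube"
    have sub: "S2 \<inter> anchored_box q \<subseteq> {Zo, Cc}" unfolding S2_def using ivp_notin[OF q] by blast
    have c2: "card (S2 \<inter> anchored_box q) \<le> 2" using card_mono[OF _ sub] dist by simp
    show "real (card (S2 \<inter> anchored_box q)) / real (card S2) - (\<Prod>i\<in>UNIV. q$i) \<le> c0 - 1/3"
    proof (cases "Cc \<in> anchored_box q")
      case True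
      then show ?thesis using C_pow[OF q True] c2 cardS2 c0b by simp
    next
      case False
      then have "S2 \<inter> anchored_box q \<subseteq> {Zo}" using sub by blast
      then have "card (S2 \<inter> anchored_box q) \<le> 1" using card_mono[of "{Zo}"] by fastforce
      then show ?thesis using prod_nonneg_cube[OF q] cardS2 c0b by simp
    qed
    show "(\<Prod>i\<in>UNIV. q$i) - real (card (S2 \<inter> anchored_box q)) / real (card S2) \<le> c0 - 1/3"
    proof (cases "Cc \<in> anchored_box q")
      case True
      then have "{Zo, Cc} \<subseteq> S2 \<inter> anchored_box q" using C_O unfolding S2_def by blast
      then have "card {Zo, Cc} \<le> card (S2 \<inter> anchored_box q)" using finS2 by (intro card_mono) auto
      then have "2 \<le> card (S2 \<inter> anchored_box q)" using dist by simp
      then show ?thesis using prod_le_one[OF q] cardS2 c0b by simp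
    next
      case False
      have pc: "(\<Prod>i\<in>UNIV. q$i) \<le> c0" using vec_notin_vol[OF q _ False[unfolded Cc_def]] c0b by simp
      show ?thesis
      proof (cases "Zo \<in> anchored_box q")
        case True
        have zin: "Zo \<in> S2 \<inter> anchored_box q" using True by (simp add: S2_def)
        have "1 \<le> card (S2 \<inter> anchored_box q)" using card_ge1[OF _ zin] finS2 by simp
        then show ?thesis using pc cardS2 by simp
      next
        case False
        then have "(\<Prod>i\<in>UNIV. q$i) = 0" unfolding Zo_def by (rule origin_notin_vol[OF q])
        moreover have "0 \<le> real (card (S2 \<inter> anchored_box q)) / real (card S2)" by simp
        ultimately show ?thesis using c0b by linarith
      qed
    qed
  qed
  have lt: "star_discrepancy S2 < star_discrepancy S"
  proof -
    have "c0 - 1/3 < 2/3 - 1 / (8 * d)" unfolding c0_def using d2 by (simp add: field_simps)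
    then show ?thesis using DS2 DS_ge by linarith
  qed
  show ?thesis by (rule conclude[OF finP Pcube cardP SP cardS nb S2P cardS2 lt])
qed


lemma D2_design:
  fixes n :: nat and i1 i2 :: "'n::finite"
  assumes n4: "4 \<le> n" and ii: "i1 \<noteq> i2"
  shows "\<exists>(P :: (real ^ 'n) set) S. finite P \<and> P \<subseteq> unit_cube \<and> card P = n \<and>
           S \<subseteq> P \<and> card S = 2 \<and>
           local_min_SDSSP P 2 1 S \<and> \<not> global_min_SDSSP P 2 S"
proof -
  define d where "d = real CARD('n)"
  have d2: "2 \<le> d" unfolding d_def
  proof -
    have "card {i1, i2} \<le> CARD('n)" by (intro card_mono) auto
    then show "2 \<le> real CARD('n)" using ii by simp
  qed
  define b0 where "b0 = 1 - 1 / (4 * d)"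
  have b0b: "7/8 \<le> b0" "b0 < 1" using d2 by (auto simp: b0_def field_simps)
  have bpow: "3/4 \<le> b0 ^ CARD('n)" unfolding b0_def d_def by (rule bern)
  have apos: "0 < (1/4::real) ^ CARD('n)" by simp
  define Iv where "Iv = (\<lambda>N. ivp i1 i2 ` {..<N})"
  define Zo where "Zo = (vec 0 :: real^'n)"
  define Aa where "Aa = (vec (1/4) :: real^'n)"
  define Bb where "Bb = (vec b0 :: real^'n)"
  define S where "S = {Zo, ivp i1 i2 0}"
  define P where "P = {Zo, Aa, Bb} \<union> Iv (n-3)"
  define S2 where "S2 = {Aa, Bb}"
  have dist: "Zo \<noteq> Aa" "Zo \<noteq> Bb" "Aa \<noteq> Bb" using b0b by (auto simp: Zo_def Aa_def Bb_def vec_eq_iff)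
  have nI1: "\<And>r. Zo \<noteq> ivp i1 i2 r" unfolding Zo_def by (rule vec_ne_ivp) simp
  have nI2: "\<And>r. Aa \<noteq> ivp i1 i2 r" unfolding Aa_def by (intro vec_ne_ivp) simp
  have nI3: "\<And>r. Bb \<noteq> ivp i1 i2 r" unfolding Bb_def using b0b by (intro vec_ne_ivp) simp
  have cIv: "\<And>N. card (Iv N) = N" unfolding Iv_def
    using card_image[OF inj_on_subset[OF inj_ivp[OF ii]]] by simp
  have fI: "\<And>N. finite (Iv N)" by (simp add: Iv_def)
  have TI: "{Zo, Aa, Bb} \<inter> Iv N = {}" for N unfolding Iv_def using nI1 nI2 nI3 by auto
  have finP: "finite P" by (simp add: P_def fI)
  have cardP: "card P = n" unfolding P_def using TI n4 dist by (simp add: card_Un_disjoint fI cIv)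
  have cardS: "card S = 2" unfolding S_def using nI1 by simp
  have cardS2: "card S2 = 2" unfolding S2_def using dist by simp
  have SP: "S \<subseteq> P" unfolding S_def P_def Iv_def using n4 by auto
  have S2P: "S2 \<subseteq> P" unfolding S2_def P_def by auto
  have Pcube: "P \<subseteq> unit_cube" unfolding P_def Iv_def Zo_def Aa_def Bb_def
    using b0b ivp_cube by (auto intro!: vec_cube simp: unit_cube_def)
  have finS: "finite S" and finS2: "finite S2" by (auto simp: S_def S2_def)
  have Ain: "\<And>q. Aa \<in> anchored_box q \<longleftrightarrow> (\<forall>i. 1/4 < q$i)" unfolding Aa_def by (simp add: vec_in_box)
  have Bin: "\<And>q. Bb \<in> anchored_box q \<longleftrightarrow> (\<forall>i. b0 < q$i)" unfolding Bb_def using b0b by (simp add: vec_in_box)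
  have DS_le: "star_discrepancy S \<le> 1/2"
  proof (rule disc_le)
    fix q :: "real^'n" assume q: "q \<in> unit_cube"
    have sb: "S \<inter> anchored_box q \<subseteq> {Zo}" unfolding S_def using ivp_notin[OF q] by blast
    have "card (S \<inter> anchored_box q) \<le> card {Zo}" by (rule card_mono[OF _ sb]) simp
    then have c1: "card (S \<inter> anchored_box q) \<le> 1" by simp
    then show "real (card (S \<inter> anchored_box q)) / real (card S) - (\<Prod>i\<in>UNIV. q$i) \<le> 1/2"
      using prod_nonneg_cube[OF q] cardS by simp
    show "(\<Prod>i\<in>UNIV. q$i) - real (card (S \<inter> anchored_box q)) / real (card S) \<le> 1/2"
    proof (cases "Zo \<in> anchored_box q")
      case True
      have zin: "Zo \<in> S \<inter> anchored_box q" using True by (simp add: S_def)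
      have "1 \<le> card (S \<inter> anchored_box q)" using card_ge1[OF _ zin] finS by simp
      then show ?thesis using prod_le_one[OF q] cardS by simp
    next
      case False
      then have "(\<Prod>i\<in>UNIV. q$i) = 0" unfolding Zo_def by (rule origin_notin_vol[OF q])
      moreover have "0 \<le> real (card (S \<inter> anchored_box q)) / real (card S)" by simp
      ultimately show ?thesis by linarith
    qed
  qed
  have DS_ge: "1/2 \<le> star_discrepancy S"
    using origin_lb[OF finS cardS] by (simp add: S_def Zo_def)
  have nb: "\<And>S'. j_swap P S 1 S' \<Longrightarrow> star_discrepancy S \<le> star_discrepancy S'"
  proof -
    fix S' assume sw: "j_swap P S 1 S'"
    obtain A B where AB: "A \<subseteq> S" "B \<subseteq> P - S" "card A = 1" "card B = 1" "S' = (S - A) \<union> B"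
      "finite S'" "card S' = card S"
      using jswap_card[OF sw finP SP] by blast
    have "1/2 \<le> star_discrepancy S'"
    proof (cases "Zo \<in> A")
      case False
      then have "vec 0 \<in> S'" using AB unfolding S_def Zo_def by auto
      then show ?thesis using origin_lb[of S' 2] AB cardS by simp
    next
      case True
      have q1: "(vec 1 :: real^'n) \<in> unit_cube" by (rule vec_cube) auto
      have "S - A \<subseteq> {ivp i1 i2 0}" using True unfolding S_def by blast
      then have "S' \<inter> anchored_box (vec 1) \<subseteq> B" using AB ivp_notin[OF q1] by blast
      moreover have "finite B" using AB finP finite_subset by blast
      ultimately have "card (S' \<inter> anchored_box (vec 1)) \<le> 1" using AB card_mono by metis
      then show ?thesis using one_visible[of S' 2] AB cardS by simp
    qed
    then show "star_discrepancy S \<le> star_discrepancy S'" using DS_le by simp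
  qed
  define Bd where "Bd = max (1/4) (max (1/2 - (1/4::real) ^ CARD('n)) (b0 - 1/2))"
  have DS2: "star_discrepancy S2 \<le> Bd"
  proof (rule disc_le)
    fix q :: "real^'n" assume q: "q \<in> unit_cube"
    have B1: "1/4 \<le> Bd" "1/2 - (1/4::real) ^ CARD('n) \<le> Bd" "b0 - 1/2 \<le> Bd" by (auto simp: Bd_def)
    have c: "real (card (S2 \<inter> anchored_box q)) / real (card S2) = real (card (S2 \<inter> anchored_box q)) / 2"
      using cardS2 by simp
    consider (b) "Bb \<in> anchored_box q" | (a) "Bb \<notin> anchored_box q" "Aa \<in> anchored_box q"
      | (n) "Bb \<notin> anchored_box q" "Aa \<notin> anchored_box q" by blast
    then have "\<bar>real (card (S2 \<inter> anchored_box q)) / real (card S2) - (\<Prod>i\<in>UNIV. q$i)\<bar> \<le> Bd"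
    proof cases
      case b
      then have "\<forall>i. b0 < q$i" using Bin by simp
      have al: "\<forall>i. 1/4 < q$i"
      proof
        fix i have "b0 < q$i" using \<open>\<forall>i. b0 < q$i\<close> by blast
        then show "1/4 < q$i" using b0b by linarith
      qed
      then have "Aa \<in> anchored_box q" using Ain by simp
      then have "S2 \<inter> anchored_box q = S2" using b by (auto simp: S2_def)
      then have cc: "real (card (S2 \<inter> anchored_box q)) / real (card S2) = 1" using cardS2 by simp
      have "\<forall>i. b0 \<le> q$i" using \<open>\<forall>i. b0 < q$i\<close> by (simp add: less_imp_le)
      then have "b0 ^ CARD('n) \<le> (\<Prod>i\<in>UNIV. q$i)" using b0b by (intro prod_ge_pow) auto
      then show ?thesis using cc bpow prod_le_one[OF q] B1 by (simp add: abs_if)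
    next
      case a
      then have "S2 \<inter> anchored_box q = {Aa}" by (auto simp: S2_def)
      then have cc: "real (card (S2 \<inter> anchored_box q)) / real (card S2) = 1/2" using cardS2 by simp
      have "\<forall>i. 1/4 \<le> q$i" using a Ain by (simp add: less_imp_le)
      then have "(1/4) ^ CARD('n) \<le> (\<Prod>i\<in>UNIV. q$i)" by (intro prod_ge_pow) auto
      moreover have "(\<Prod>i\<in>UNIV. q$i) \<le> b0" using vec_notin_vol[OF q _ a(1)[unfolded Bb_def]] b0b by simp
      ultimately show ?thesis using cc B1 by (simp add: abs_if)
    next
      case n
      then have "S2 \<inter> anchored_box q = {}" by (auto simp: S2_def)
      then have cc: "real (card (S2 \<inter> anchored_box q)) / real (card S2) = 0" by simp
      have "(\<Prod>i\<in>UNIV. q$i) \<le> 1/4" using vec_notin_vol[OF q _ n(2)[unfolded Aa_def]] by simp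
      then show ?thesis unfolding cc using B1 prod_nonneg_cube[OF q] by simp
    qed
    then show "real (card (S2 \<inter> anchored_box q)) / real (card S2) - (\<Prod>i\<in>UNIV. q$i) \<le> Bd"
      and "(\<Prod>i\<in>UNIV. q$i) - real (card (S2 \<inter> anchored_box q)) / real (card S2) \<le> Bd"
      by (simp_all add: abs_le_iff)
  qed
  have lt: "star_discrepancy S2 < star_discrepancy S"
  proof -
    have h1: "1 / (4 * d) > 0" using d2 by simp
    have "Bd < 1/2" using apos h1 unfolding Bd_def b0_def max_less_iff_conj by linarith
    then show ?thesis using DS2 DS_ge by linarith
  qed
  show ?thesis by (rule conclude[OF finP Pcube cardP SP cardS nb S2P cardS2 lt])
qed

theorem proposition1:
  fixes n k j :: nat
  assumes "CARD('n::finite) \<ge> 2"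
    and "0 < n" and "0 < k" and "0 < j" and "k \<le> n"
    and "(n \<ge> 2 * k \<and> j < k) \<or> (n < 2 * k \<and> j < n - k)"
  shows "\<exists>(P :: (real ^ 'n) set) S. finite P \<and> P \<subseteq> unit_cube \<and> card P = n \<and>
           S \<subseteq> P \<and> card S = k \<and>
           local_min_SDSSP P k j S \<and> \<not> global_min_SDSSP P k S"
proof -
  have "\<not> CARD('n) \<le> Suc 0" using assms(1) by simp
  then obtain i1 i2 :: 'n where ii: "i1 \<noteq> i2"
    using card_le_Suc0_iff_eq[of "UNIV :: 'n set"] by auto
  show ?thesis
  proof (cases "j + 2 \<le> k")
    case True
    have "k + (j + 1) \<le> n" using assms(6) True by auto
    then show ?thesis using T_design[of "j+1" k i1 i2 n j] True ii assms(4) by simp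
  next
    case False
    have jk: "j + 1 = k" using assms(6) False by auto
    have kn: "2 * k \<le> n" using assms(6) jk by auto
    consider "k = 2" | "k = 3" | "4 \<le> k" using jk assms(4) by linarith
    then show ?thesis
    proof cases
      case 1
      then have "j = 1" using jk by simp
      then show ?thesis using D2_design[of n i1 i2] ii kn 1 by simp
    next
      case 2
      then have "j = 2" using jk by simp
      then show ?thesis using D3_design[of n i1 i2] ii kn 2 by simp
    next
      case 3
      then show ?thesis using C_design[of k n j i1 i2] ii kn jk by simp
    qed
  qed
qed

end
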